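(* Let $X_1,\dots,X_n$ be the $x$-slices of a tensor $T\in\overline{\mathrm{OT}_n(\mathbb{C})}$. Then the $n^2$ matrices $X_k^TX_l$ ($1\le k,l\le n$) are symmetric and approximately simultaneously diagonalizable, and likewise the $n^2$ matrices $X_kX_l^T$ are symmetric and approximately simultaneously diagonalizable. The same holds for the $y$-slices and for the $z$-slices.
   Context: Associate to $T$ the trilinear form $t=\sum_{i,j,k}T_{ijk}x_iy_jz_k$. $\mathrm{OT}_n(\mathbb{C})$ is the set of tensors whose trilinear form can be written $g(Ax,By,Cz)$ with $A,B,C$ complex orthogonal ($A^TA=\mathrm{Id}$) and $g=\sum_i\alpha_ix_iy_iz_i$; closure is in the Euclidean topology. Slices: $X_k=(T_{kjl})_{j,l}$, $Y_k=(T_{ikl})_{i,l}$, $Z_k=(T_{ijk})_{i,j}$. A tuple $(M_1,\dots,M_m)$ of matrices in $M_n(\mathbb{C})$ is approximately simultaneously diagonalizable if for every $\epsilon>0$ there are simultaneously diagonalizable $B_1,\dots,B_m$ with $\|M_i-B_i\|<\epsilon$ for all $i$. *)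

theory Defs
  imports "HOL-Analysis.Analysis"
begin

text \<open>Tensors in C^n (x) C^n (x) C^n, the dimension n being the cardinality of the
  finite index type 'n. Entry T_{ijk} is T $ i $ j $ k.\<close>
type_synonym 'n tensor3 = "complex ^'n ^'n ^'n"

definition trilinear_form :: "'n::finite tensor3 \<Rightarrow> complex^'n \<Rightarrow> complex^'n \<Rightarrow> complex^'n \<Rightarrow> complex" where
  "trilinear_form T x y z = (\<Sum>i\<in>UNIV. \<Sum>j\<in>UNIV. \<Sum>k\<in>UNIV. T $ i $ j $ k * x $ i * y $ j * z $ k)"

definition complex_orthogonal :: "complex^'n^'n \<Rightarrow> bool" where
  "complex_orthogonal A \<longleftrightarrow> transpose A ** A = mat 1"

definition diag_form :: "complex^'n \<Rightarrow> complex^'n \<Rightarrow> complex^'n \<Rightarrow> complex^'n \<Rightarrow> complex" where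
  "diag_form \<alpha> x y z = (\<Sum>i\<in>UNIV. \<alpha> $ i * x $ i * y $ i * z $ i)"

definition OT :: "'n::finite tensor3 set" where
  "OT = {T. \<exists>A B C \<alpha>. complex_orthogonal A \<and> complex_orthogonal B \<and> complex_orthogonal C \<and>
             (\<forall>x y z. trilinear_form T x y z = diag_form \<alpha> (A *v x) (B *v y) (C *v z))}"

definition xslice :: "'n::finite tensor3 \<Rightarrow> 'n \<Rightarrow> complex^'n^'n" where
  "xslice T k = (\<chi> j l. T $ k $ j $ l)"

definition yslice :: "'n::finite tensor3 \<Rightarrow> 'n \<Rightarrow> complex^'n^'n" where
  "yslice T k = (\<chi> i l. T $ i $ k $ l)"

definition zslice :: "'n::finite tensor3 \<Rightarrow> 'n \<Rightarrow> complex^'n^'n" where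
  "zslice T k = (\<chi> i j. T $ i $ j $ k)"

definition is_diagonal_matrix :: "complex^'n^'n \<Rightarrow> bool" where
  "is_diagonal_matrix D \<longleftrightarrow> (\<forall>i j. i \<noteq> j \<longrightarrow> D $ i $ j = 0)"

definition symmetric_matrix :: "complex^'n^'n \<Rightarrow> bool" where
  "symmetric_matrix M \<longleftrightarrow> transpose M = M"

definition simultaneously_diagonalizable :: "('i \<Rightarrow> complex^'n::finite^'n) \<Rightarrow> bool" where
  "simultaneously_diagonalizable B \<longleftrightarrow>
     (\<exists>P::complex^'n^'n. invertible P \<and> (\<forall>i. is_diagonal_matrix (matrix_inv P ** B i ** P)))"

definition approx_simultaneously_diagonalizable :: "('i \<Rightarrow> complex^'n::finite^'n) \<Rightarrow> bool" where
  "approx_simultaneously_diagonalizable M \<longleftrightarrow>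
     (\<forall>e>0. \<exists>B. simultaneously_diagonalizable B \<and> (\<forall>i. norm (M i - B i) < e))"

end

theory Submission
  imports Defs
begin

definition dm :: "complex^'n \<Rightarrow> complex^'n^'n" where
  "dm v = (\<chi> i j. if i = j then v $ i else 0)"

lemma inv_unique:
  fixes A B :: "complex^'n::finite^'n"
  assumes "A ** B = mat 1" "B ** A = mat 1"
  shows "matrix_inv A = B"
proof -
  have ex: "\<exists>A'. A ** A' = mat 1 \<and> A' ** A = mat 1" using assms by blast
  have "A ** matrix_inv A = mat 1 \<and> matrix_inv A ** A = mat 1"
    unfolding matrix_inv_def by (rule someI_ex[OF ex])
  then have "matrix_inv A ** A = mat 1" by blast
  then have "matrix_inv A = matrix_inv A ** (A ** B)" using assms by simp
  also have "\<dots> = B" using \<open>matrix_inv A ** A = mat 1\<close> by (simp add: matrix_mul_assoc)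
  finally show ?thesis .
qed

lemma orth_right:
  fixes Q :: "complex^'n::finite^'n"
  assumes "complex_orthogonal Q"
  shows "Q ** transpose Q = mat 1"
  using assms unfolding complex_orthogonal_def by (metis matrix_left_right_inverse)

lemma dm_transpose: "transpose (dm v) = dm v"
  unfolding dm_def transpose_def by (rule vec_eq_iff[THEN iffD2]) auto

lemma dm_mult:
  fixes a b :: "complex^'n::finite"
  shows "dm a ** dm b = dm (a * b)"
proof -
  have "(\<Sum>k\<in>UNIV. (if i = k then a $ i else 0) * (if k = j then b $ k else 0))
      = (if i = j then a $ i * b $ i else 0)" for i j :: 'n
  proof -
    have "(\<Sum>k\<in>UNIV. (if i = k then a $ i else 0) * (if k = j then b $ k else 0))
       = (\<Sum>k\<in>UNIV. if k = i then a $ i * (if i = j then b $ i else 0) else 0)"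
      by (rule sum.cong) auto
    then show ?thesis by simp
  qed
  then show ?thesis unfolding dm_def matrix_matrix_mult_def by (simp add: vec_eq_iff)
qed

lemma dm_diag: "is_diagonal_matrix (dm v)"
  unfolding dm_def is_diagonal_matrix_def by simp

lemma conj_sym:
  fixes Q :: "complex^'n::finite^'n"
  shows "symmetric_matrix (transpose Q ** dm v ** Q)"
  unfolding symmetric_matrix_def
  by (simp add: matrix_transpose_mul dm_transpose matrix_mul_assoc)

lemma conj_sd:
  fixes Q :: "complex^'n::finite^'n"
  assumes "complex_orthogonal Q"
  shows "simultaneously_diagonalizable (\<lambda>i. transpose Q ** dm (v i) ** Q)"
proof -
  have r: "Q ** transpose Q = mat 1" using orth_right[OF assms] .
  have l: "transpose Q ** Q = mat 1" using assms unfolding complex_orthogonal_def .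
  have inv: "invertible (transpose Q)" unfolding invertible_def using r l by blast
  have mi: "matrix_inv (transpose Q) = Q" using inv_unique[OF l r] .
  have "matrix_inv (transpose Q) ** (transpose Q ** dm (v i) ** Q) ** transpose Q = dm (v i)" for i
  proof -
    have "Q ** (transpose Q ** dm (v i) ** Q) ** transpose Q
        = (Q ** transpose Q) ** dm (v i) ** (Q ** transpose Q)"
      by (simp add: matrix_mul_assoc)
    then show ?thesis using mi r by simp
  qed
  then show ?thesis unfolding simultaneously_diagonalizable_def
    using inv dm_diag by metis
qed

lemma fact_good:
  fixes P Q :: "complex^'n::finite^'n"
  assumes P: "complex_orthogonal P" and Q: "complex_orthogonal Q"
    and S: "\<And>k. S k = transpose P ** dm (d k) ** Q"
  shows "(\<forall>k l. symmetric_matrix (transpose (S k) ** S l)) \<and>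
           simultaneously_diagonalizable (\<lambda>(k, l). transpose (S k) ** S l) \<and>
           (\<forall>k l. symmetric_matrix (S k ** transpose (S l))) \<and>
           simultaneously_diagonalizable (\<lambda>(k, l). S k ** transpose (S l))"
proof -
  have rP: "P ** transpose P = mat 1" using orth_right[OF P] .
  have rQ: "Q ** transpose Q = mat 1" using orth_right[OF Q] .
  have e1: "transpose (S k) ** S l = transpose Q ** dm (d k * d l) ** Q" for k l
  proof -
    have "transpose (S k) ** S l = transpose Q ** dm (d k) ** (P ** transpose P) ** dm (d l) ** Q"
      unfolding S by (simp add: matrix_transpose_mul dm_transpose matrix_mul_assoc)
    also have "\<dots> = transpose Q ** (dm (d k) ** dm (d l)) ** Q" using rP by (simp add: matrix_mul_assoc)
    finally show ?thesis by (simp add: dm_mult)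
  qed
  have e2: "S k ** transpose (S l) = transpose P ** dm (d k * d l) ** P" for k l
  proof -
    have "S k ** transpose (S l) = transpose P ** dm (d k) ** (Q ** transpose Q) ** dm (d l) ** P"
      unfolding S by (simp add: matrix_transpose_mul dm_transpose matrix_mul_assoc)
    also have "\<dots> = transpose P ** (dm (d k) ** dm (d l)) ** P" using rQ by (simp add: matrix_mul_assoc)
    finally show ?thesis by (simp add: dm_mult)
  qed
  have f1: "(\<lambda>(k, l). transpose (S k) ** S l) = (\<lambda>kl. transpose Q ** dm ((\<lambda>(k,l). d k * d l) kl) ** Q)"
    using e1 by auto
  have f2: "(\<lambda>(k, l). S k ** transpose (S l)) = (\<lambda>kl. transpose P ** dm ((\<lambda>(k,l). d k * d l) kl) ** P)"
    using e2 by auto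
  show ?thesis
    unfolding f1 f2
    apply (intro conjI)
    apply (simp add: e1 conj_sym)
    apply (rule conj_sd[OF Q])
    apply (simp add: e2 conj_sym)
    apply (rule conj_sd[OF P])
    done
qed

lemma mv_axis:
  fixes A :: "complex^'n::finite^'n"
  shows "(A *v axis i 1) $ r = A $ r $ i"
proof -
  have "(\<Sum>j\<in>UNIV. A $ r $ j * (if j = i then 1 else 0)) = A $ r $ i"
    by (simp add: if_distrib cong: if_cong)
  then show ?thesis by (simp add: matrix_vector_mult_def axis_def)
qed

lemma tri_axis:
  fixes T :: "'n::finite tensor3"
  shows "trilinear_form T (axis i 1) (axis j 1) (axis k 1) = T $ i $ j $ k"
proof -
  have ax: "axis i (1::complex) $ a = (if a = i then 1 else 0)" for i a :: 'n by (simp add: axis_def)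
  have h: "(x::complex) * (if P then 1 else 0) = (if P then x else 0)" for x P by simp
  show ?thesis unfolding trilinear_form_def ax h by simp
qed

lemma OT_entries:
  fixes T :: "'n::finite tensor3"
  assumes "T \<in> OT"
  shows "\<exists>A B C \<alpha>. complex_orthogonal A \<and> complex_orthogonal B \<and> complex_orthogonal C \<and>
     (\<forall>i j k. T $ i $ j $ k = (\<Sum>r\<in>UNIV. \<alpha> $ r * A $ r $ i * B $ r $ j * C $ r $ k))"
proof -
  obtain A B C \<alpha> where o: "complex_orthogonal A" "complex_orthogonal B" "complex_orthogonal C"
    and f: "\<And>x y z. trilinear_form T x y z = diag_form \<alpha> (A *v x) (B *v y) (C *v z)"
    using assms unfolding OT_def by blast
  have "T $ i $ j $ k = (\<Sum>r\<in>UNIV. \<alpha> $ r * A $ r $ i * B $ r $ j * C $ r $ k)" for i j k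
    using f[of "axis i 1" "axis j 1" "axis k 1"] by (simp add: tri_axis diag_form_def mv_axis)
  then show ?thesis using o by blast
qed

lemma dm_entry:
  fixes P Q :: "complex^'n::finite^'n"
  shows "(transpose P ** dm v ** Q) $ a $ b = (\<Sum>r\<in>UNIV. P $ r $ a * v $ r * Q $ r $ b)"
proof -
  have "(transpose P ** dm v ** Q) $ a $ b
      = (\<Sum>s\<in>UNIV. (\<Sum>r\<in>UNIV. P $ r $ a * (if r = s then v $ r else 0)) * Q $ s $ b)"
    by (simp add: matrix_matrix_mult_def transpose_def dm_def)
  also have "\<dots> = (\<Sum>s\<in>UNIV. P $ s $ a * v $ s * Q $ s $ b)"
    by (simp add: if_distrib cong: if_cong)
  finally show ?thesis .
qed

lemma OT_good:
  fixes T :: "'n::finite tensor3"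
  assumes "T \<in> OT"
  shows "\<forall>S \<in> {xslice T, yslice T, zslice T}.
           (\<forall>k l. symmetric_matrix (transpose (S k) ** S l)) \<and>
           simultaneously_diagonalizable (\<lambda>(k, l). transpose (S k) ** S l) \<and>
           (\<forall>k l. symmetric_matrix (S k ** transpose (S l))) \<and>
           simultaneously_diagonalizable (\<lambda>(k, l). S k ** transpose (S l))"
proof -
  obtain A B C \<alpha> where oA: "complex_orthogonal A" and oB: "complex_orthogonal B"
    and oC: "complex_orthogonal C"
    and e: "\<And>i j k. T $ i $ j $ k = (\<Sum>r\<in>UNIV. \<alpha> $ r * A $ r $ i * B $ r $ j * C $ r $ k)"
    using OT_entries[OF assms] by blast
  have x: "xslice T k = transpose B ** dm (\<chi> r. \<alpha> $ r * A $ r $ k) ** C" for k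
    unfolding xslice_def by (simp add: vec_eq_iff dm_entry e mult_ac)
  have y: "yslice T k = transpose A ** dm (\<chi> r. \<alpha> $ r * B $ r $ k) ** C" for k
    unfolding yslice_def by (simp add: vec_eq_iff dm_entry e mult_ac)
  have z: "zslice T k = transpose A ** dm (\<chi> r. \<alpha> $ r * C $ r $ k) ** B" for k
    unfolding zslice_def by (simp add: vec_eq_iff dm_entry e mult_ac)
  show ?thesis
    using fact_good[OF oB oC, of "xslice T", OF x] fact_good[OF oA oC, of "yslice T", OF y]
      fact_good[OF oA oB, of "zslice T", OF z] by blast
qed

lemma tendsto_matmul:
  fixes f g :: "'a \<Rightarrow> complex^'n::finite^'n"
  assumes "(f \<longlongrightarrow> F) net" "(g \<longlongrightarrow> G) net"
  shows "((\<lambda>x. f x ** g x) \<longlongrightarrow> F ** G) net"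
  unfolding matrix_matrix_mult_def
  by (intro tendsto_vec_lambda tendsto_sum tendsto_mult tendsto_vec_nth assms)

lemma tendsto_transp:
  fixes f :: "'a \<Rightarrow> complex^'n::finite^'n"
  assumes "(f \<longlongrightarrow> F) net"
  shows "((\<lambda>x. transpose (f x)) \<longlongrightarrow> transpose F) net"
  unfolding transpose_def
  by (intro tendsto_vec_lambda tendsto_vec_nth assms)

lemma closure_generic:
  fixes G :: "'n::finite tensor3 \<Rightarrow> 'i::finite \<Rightarrow> complex^'n^'n"
  assumes cont: "\<And>Ts T i. Ts \<longlonglongrightarrow> T \<Longrightarrow> (\<lambda>m. G (Ts m) i) \<longlonglongrightarrow> G T i"
    and good: "\<And>T. T \<in> OT \<Longrightarrow> (\<forall>i. symmetric_matrix (G T i)) \<and> simultaneously_diagonalizable (G T)"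
    and T: "T \<in> closure OT"
  shows "(\<forall>i. symmetric_matrix (G T i)) \<and> approx_simultaneously_diagonalizable (G T)"
proof -
  obtain Ts where Ts: "\<And>m. Ts m \<in> OT" and lim: "Ts \<longlonglongrightarrow> T"
    using T unfolding closure_sequential by blast
  have L: "(\<lambda>m. G (Ts m) i) \<longlonglongrightarrow> G T i" for i using cont[OF lim] .
  have sym: "symmetric_matrix (G T i)" for i
  proof -
    have "(\<lambda>m. transpose (G (Ts m) i)) \<longlonglongrightarrow> transpose (G T i)" using tendsto_transp[OF L] .
    moreover have "(\<lambda>m. transpose (G (Ts m) i)) = (\<lambda>m. G (Ts m) i)"
      using good[OF Ts] unfolding symmetric_matrix_def by auto
    ultimately have "(\<lambda>m. G (Ts m) i) \<longlonglongrightarrow> transpose (G T i)" by simp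
    then have "transpose (G T i) = G T i" using L LIMSEQ_unique by blast
    then show ?thesis unfolding symmetric_matrix_def .
  qed
  have "approx_simultaneously_diagonalizable (G T)"
    unfolding approx_simultaneously_diagonalizable_def
  proof (intro allI impI)
    fix e :: real assume e: "e > 0"
    have "\<forall>\<^sub>F m in sequentially. dist (G (Ts m) i) (G T i) < e" for i
      using L e by (rule tendstoD)
    then have "\<forall>\<^sub>F m in sequentially. \<forall>i. dist (G (Ts m) i) (G T i) < e"
      by (rule eventually_all_finite)
    then obtain m where m: "\<forall>i. dist (G (Ts m) i) (G T i) < e"
      using eventually_sequentially by auto
    show "\<exists>B. simultaneously_diagonalizable B \<and> (\<forall>i. norm (G T i - B i) < e)"
      using good[OF Ts, of m] m by (metis dist_norm dist_commute)
  qed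
  then show ?thesis using sym by blast
qed

lemma slice_tendsto:
  fixes Ts :: "nat \<Rightarrow> 'n::finite tensor3"
  assumes "Ts \<longlonglongrightarrow> T"
  shows "(\<lambda>m. xslice (Ts m) k) \<longlonglongrightarrow> xslice T k"
    "(\<lambda>m. yslice (Ts m) k) \<longlonglongrightarrow> yslice T k"
    "(\<lambda>m. zslice (Ts m) k) \<longlonglongrightarrow> zslice T k"
  unfolding xslice_def yslice_def zslice_def
  by (intro tendsto_vec_lambda tendsto_vec_nth assms)+

lemma one_slice:
  fixes sl :: "'n::finite tensor3 \<Rightarrow> 'n \<Rightarrow> complex^'n^'n"
  assumes cont: "\<And>Ts T k. Ts \<longlonglongrightarrow> T \<Longrightarrow> (\<lambda>m. sl (Ts m) k) \<longlonglongrightarrow> sl T k"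
    and good: "\<And>T. T \<in> OT \<Longrightarrow>
           (\<forall>k l. symmetric_matrix (transpose (sl T k) ** sl T l)) \<and>
           simultaneously_diagonalizable (\<lambda>(k, l). transpose (sl T k) ** sl T l) \<and>
           (\<forall>k l. symmetric_matrix (sl T k ** transpose (sl T l))) \<and>
           simultaneously_diagonalizable (\<lambda>(k, l). sl T k ** transpose (sl T l))"
    and T: "T \<in> closure OT"
  shows "(\<forall>k l. symmetric_matrix (transpose (sl T k) ** sl T l)) \<and>
           approx_simultaneously_diagonalizable (\<lambda>(k, l). transpose (sl T k) ** sl T l) \<and>
           (\<forall>k l. symmetric_matrix (sl T k ** transpose (sl T l))) \<and>
           approx_simultaneously_diagonalizable (\<lambda>(k, l). sl T k ** transpose (sl T l))"
proof -
  have 1: "(\<forall>i. symmetric_matrix ((\<lambda>T (k, l). transpose (sl T k) ** sl T l) T i)) \<and>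
      approx_simultaneously_diagonalizable ((\<lambda>T (k, l). transpose (sl T k) ** sl T l) T)"
  proof (rule closure_generic[OF _ _ T])
    fix Ts :: "nat \<Rightarrow> 'n tensor3" and T :: "'n tensor3" and i :: "'n \<times> 'n" assume "Ts \<longlonglongrightarrow> T"
    then show "(\<lambda>m. (\<lambda>T (k, l). transpose (sl T k) ** sl T l) (Ts m) i) \<longlonglongrightarrow>
       (\<lambda>T (k, l). transpose (sl T k) ** sl T l) T i"
      by (cases i) (simp add: tendsto_matmul tendsto_transp cont)
  next
    fix T :: "'n tensor3" assume "T \<in> OT"
    then show "(\<forall>i. symmetric_matrix ((\<lambda>T (k, l). transpose (sl T k) ** sl T l) T i)) \<and>
        simultaneously_diagonalizable ((\<lambda>T (k, l). transpose (sl T k) ** sl T l) T)"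
      using good by auto
  qed
  have 2: "(\<forall>i. symmetric_matrix ((\<lambda>T (k, l). sl T k ** transpose (sl T l)) T i)) \<and>
      approx_simultaneously_diagonalizable ((\<lambda>T (k, l). sl T k ** transpose (sl T l)) T)"
  proof (rule closure_generic[OF _ _ T])
    fix Ts :: "nat \<Rightarrow> 'n tensor3" and T :: "'n tensor3" and i :: "'n \<times> 'n" assume "Ts \<longlonglongrightarrow> T"
    then show "(\<lambda>m. (\<lambda>T (k, l). sl T k ** transpose (sl T l)) (Ts m) i) \<longlonglongrightarrow>
       (\<lambda>T (k, l). sl T k ** transpose (sl T l)) T i"
      by (cases i) (simp add: tendsto_matmul tendsto_transp cont)
  next
    fix T :: "'n tensor3" assume "T \<in> OT"
    then show "(\<forall>i. symmetric_matrix ((\<lambda>T (k, l). sl T k ** transpose (sl T l)) T i)) \<and>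
        simultaneously_diagonalizable ((\<lambda>T (k, l). sl T k ** transpose (sl T l)) T)"
      using good by auto
  qed
  show ?thesis using 1 2 by auto
qed

theorem proposition48:
  fixes T :: "'n::finite tensor3"
  assumes "T \<in> closure OT"
  shows "\<forall>S \<in> {xslice T, yslice T, zslice T}.
           (\<forall>k l. symmetric_matrix (transpose (S k) ** S l)) \<and>
           approx_simultaneously_diagonalizable (\<lambda>(k, l). transpose (S k) ** S l) \<and>
           (\<forall>k l. symmetric_matrix (S k ** transpose (S l))) \<and>
           approx_simultaneously_diagonalizable (\<lambda>(k, l). S k ** transpose (S l))"
proof -
  have gx: "\<And>T. T \<in> OT \<Longrightarrow>
           (\<forall>k l. symmetric_matrix (transpose (xslice T k) ** xslice T l)) \<and>
           simultaneously_diagonalizable (\<lambda>(k, l). transpose (xslice T k) ** xslice T l) \<and>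
           (\<forall>k l. symmetric_matrix (xslice T k ** transpose (xslice T l))) \<and>
           simultaneously_diagonalizable (\<lambda>(k, l). xslice T k ** transpose (xslice T l))"
    using OT_good by blast
  have gy: "\<And>T. T \<in> OT \<Longrightarrow>
           (\<forall>k l. symmetric_matrix (transpose (yslice T k) ** yslice T l)) \<and>
           simultaneously_diagonalizable (\<lambda>(k, l). transpose (yslice T k) ** yslice T l) \<and>
           (\<forall>k l. symmetric_matrix (yslice T k ** transpose (yslice T l))) \<and>
           simultaneously_diagonalizable (\<lambda>(k, l). yslice T k ** transpose (yslice T l))"
    using OT_good by blast
  have gz: "\<And>T. T \<in> OT \<Longrightarrow>
           (\<forall>k l. symmetric_matrix (transpose (zslice T k) ** zslice T l)) \<and>
           simultaneously_diagonalizable (\<lambda>(k, l). transpose (zslice T k) ** zslice T l) \<and>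
           (\<forall>k l. symmetric_matrix (zslice T k ** transpose (zslice T l))) \<and>
           simultaneously_diagonalizable (\<lambda>(k, l). zslice T k ** transpose (zslice T l))"
    using OT_good by blast
  show ?thesis
    using one_slice[where sl=xslice, OF slice_tendsto(1) gx assms]
      one_slice[where sl=yslice, OF slice_tendsto(2) gy assms]
      one_slice[where sl=zslice, OF slice_tendsto(3) gz assms] by blast
qed

end
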